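(* Let $n,r\ge 1$, ${\bf A}\in\mathbb{H}^n$, $g\in\mathcal{G}$, and ${\bf X}_0\in\mathbb{C}^{n\times r}$. Define $${\bf U}_1({\bf X})={\bf X}^{\mathrm H}{\bf A}^{(+)}{\bf X}+{\bf X}^{\mathrm H}{\bf A}^{(-)}{\bf X}_0+{\bf X}_0^{\mathrm H}{\bf A}^{(-)}{\bf X}-{\bf X}_0^{\mathrm H}{\bf A}^{(-)}{\bf X}_0,$$ $${\bf U}_2({\bf X})={\bf X}^{\mathrm H}{\bf A}^{(-)}{\bf X}+{\bf X}^{\mathrm H}{\bf A}^{(+)}{\bf X}_0+{\bf X}_0^{\mathrm H}{\bf A}^{(+)}{\bf X}-{\bf X}_0^{\mathrm H}{\bf A}^{(+)}{\bf X}_0,$$ and $u({\bf X};{\bf X}_0)=g({\bf U}_1({\bf X}))$ if $g$ is MND, $u({\bf X};{\bf X}_0)=g({\bf U}_2({\bf X}))$ if $g$ is MNI. Then: (i) $u(\cdot;{\bf X}_0)$ is convex on $\mathbb{C}^{n\times r}$ (viewed as a real vector space); (ii) $u({\bf X};{\bf X}_0)\ge g({\bf X}^{\mathrm H}{\bf A}{\bf X})$ for all ${\bf X}\in\mathbb{C}^{n\times r}$; (iii) $u({\bf X}_0;{\bf X}_0)=g({\bf X}_0^{\mathrm H}{\bf A}{\bf X}_0)$; (iv) the functions ${\bf X}\mapsto u({\bf X};{\bf X}_0)$ and ${\bf X}\mapsto g({\bf X}^{\mathrm H}{\bf A}{\bf X})$ have the same (real Fréchet) derivative at ${\bf X}={\bf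 X}_0$.
   Context: $\mathbb{H}^m$ denotes the real vector space of $m\times m$ complex Hermitian matrices, with inner product $\langle{\bf U},{\bf V}\rangle=\mathrm{tr}({\bf U}{\bf V})$; ${\bf U}\succeq{\bf V}$ means ${\bf U}-{\bf V}$ is positive semidefinite. For ${\bf A}\in\mathbb{H}^n$ with eigen-decomposition ${\bf A}=\sum_i\lambda_i{\bf u}_i{\bf u}_i^{\mathrm H}$ (orthonormal ${\bf u}_i$), ${\bf A}^{(+)}=\sum_{\lambda_i>0}\lambda_i{\bf u}_i{\bf u}_i^{\mathrm H}$ and ${\bf A}^{(-)}=\sum_{\lambda_i<0}\lambda_i{\bf u}_i{\bf u}_i^{\mathrm H}$, so ${\bf A}={\bf A}^{(+)}+{\bf A}^{(-)}$. A function $g:\mathbb{H}^r\to\mathbb{R}$ is MND (matrix nondecreasing) if ${\bf W}_1\succeq{\bf W}_2\Rightarrow g({\bf W}_1)\ge g({\bf W}_2)$, and MNI (matrix nonincreasing) if ${\bf W}_1\succeq{\bf W}_2\Rightarrow g({\bf W}_1)\le g({\bf W}_2)$. $\mathcal{G}$ is the family of differentiable convex functions $g:\mathbb{H}^r\to\mathbb{R}$ that are MND or MNI. *)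

theory Defs
  imports "HOL-Analysis.Analysis"
begin

definition adj :: "complex^'n^'m \<Rightarrow> complex^'m^'n" where
  "adj X = (\<chi> i j. cnj (X $ j $ i))"

definition hermitian :: "complex^'n^'n \<Rightarrow> bool" where
  "hermitian M \<longleftrightarrow> adj M = M"

definition herm_set :: "(complex^'n^'n) set" where
  "herm_set = {M. hermitian M}"

definition qform :: "complex^'n^'n \<Rightarrow> complex^'n \<Rightarrow> complex" where
  "qform M v = (\<Sum>i\<in>UNIV. \<Sum>j\<in>UNIV. cnj (v $ i) * M $ i $ j * v $ j)"

definition psd :: "complex^'n^'n \<Rightarrow> bool" where
  "psd M \<longleftrightarrow> hermitian M \<and> (\<forall>v. 0 \<le> Re (qform M v))"

definition loewner_ge :: "complex^'n^'n \<Rightarrow> complex^'n^'n \<Rightarrow> bool" where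
  "loewner_ge U V \<longleftrightarrow> psd (U - V)"

definition MND :: "(complex^'r^'r \<Rightarrow> real) \<Rightarrow> bool" where
  "MND g \<longleftrightarrow> (\<forall>W1\<in>herm_set. \<forall>W2\<in>herm_set. loewner_ge W1 W2 \<longrightarrow> g W1 \<ge> g W2)"

definition MNI :: "(complex^'r^'r \<Rightarrow> real) \<Rightarrow> bool" where
  "MNI g \<longleftrightarrow> (\<forall>W1\<in>herm_set. \<forall>W2\<in>herm_set. loewner_ge W1 W2 \<longrightarrow> g W1 \<le> g W2)"

text \<open>The family G: differentiable convex functions on H^r that are MND or MNI.
  g is a function on all r x r complex matrices, but only its values on H^r matter;
  convexity and (real Frechet) differentiability are relative to H^r.\<close>
definition in_G :: "(complex^'r^'r \<Rightarrow> real) \<Rightarrow> bool" where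
  "in_G g \<longleftrightarrow> convex_on herm_set g \<and> (\<forall>W\<in>herm_set. g differentiable (at W within herm_set))
              \<and> (MND g \<or> MNI g)"

definition outer :: "complex^'n \<Rightarrow> complex^'n^'n" where
  "outer v = (\<chi> a b. v $ a * cnj (v $ b))"

definition eigen_decomp :: "complex^'n^'n \<Rightarrow> ('n \<Rightarrow> complex^'n) \<Rightarrow> ('n \<Rightarrow> real) \<Rightarrow> bool" where
  "eigen_decomp A u lam \<longleftrightarrow>
     (\<forall>i j. (\<Sum>k\<in>UNIV. cnj (u i $ k) * u j $ k) = (if i = j then 1 else 0)) \<and>
     A = (\<Sum>i\<in>UNIV. (\<chi> a b. complex_of_real (lam i) * outer (u i) $ a $ b))"

definition pos_part :: "('n \<Rightarrow> complex^'n) \<Rightarrow> ('n \<Rightarrow> real) \<Rightarrow> complex^'n^'n" where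
  "pos_part u lam = (\<Sum>i\<in>{i. lam i > 0}. (\<chi> a b. complex_of_real (lam i) * outer (u i) $ a $ b))"

definition neg_part :: "('n \<Rightarrow> complex^'n) \<Rightarrow> ('n \<Rightarrow> real) \<Rightarrow> complex^'n^'n" where
  "neg_part u lam = (\<Sum>i\<in>{i. lam i < 0}. (\<chi> a b. complex_of_real (lam i) * outer (u i) $ a $ b))"

end

theory Submission
  imports Defs
begin


lemma adj_nth[simp]: "adj X $ i $ j = cnj (X $ j $ i)"
  by (simp add: adj_def)

lemma adj_adj[simp]: "adj (adj X) = X"
  by (simp add: vec_eq_iff)

lemma adj_add: "adj (X + Y) = adj X + adj Y"
  by (simp add: vec_eq_iff)

lemma adj_diff: "adj (X - Y) = adj X - adj Y"
  by (simp add: vec_eq_iff)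

lemma adj_uminus: "adj (- X) = - adj X"
  by (simp add: vec_eq_iff)

lemma scaleR_mat_nth[simp]: "(c *\<^sub>R (X::complex^'a^'b)) $ i $ j = of_real c * X $ i $ j"
  by (simp only: vector_scaleR_component) (simp add: scaleR_conv_of_real)

lemma adj_scaleR: "adj (c *\<^sub>R X) = c *\<^sub>R adj X"
  by (simp add: vec_eq_iff)

lemma adj_mult: "adj (A ** B) = adj B ** adj A"
  by (simp add: vec_eq_iff matrix_matrix_mult_def cnj_sum mult.commute)

lemma mmult_scaleR_left: "(c *\<^sub>R (A::complex^_^_)) ** B = c *\<^sub>R (A ** B)"
  by (simp add: vec_eq_iff matrix_matrix_mult_def sum_distrib_left mult.assoc scaleR_sum_right)

lemma mmult_scaleR_right: "(A::complex^_^_) ** (c *\<^sub>R B) = c *\<^sub>R (A ** B)"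
  by (simp add: vec_eq_iff matrix_matrix_mult_def sum_distrib_left mult.left_commute scaleR_sum_right)

lemma mmult_diff_left: "((A::complex^_^_) - B) ** C = A ** C - B ** C"
  by (simp add: vec_eq_iff matrix_matrix_mult_def algebra_simps sum_subtractf)

lemma mmult_diff_right: "(C::complex^_^_) ** (A - B) = C ** A - C ** B"
  by (simp add: vec_eq_iff matrix_matrix_mult_def algebra_simps sum_subtractf)

lemma mmult_uminus_left: "(- (A::complex^_^_)) ** C = - (A ** C)"
  by (simp add: vec_eq_iff matrix_matrix_mult_def sum_negf)

lemma mmult_uminus_right: "(C::complex^_^_) ** (- A) = - (C ** A)"
  by (simp add: vec_eq_iff matrix_matrix_mult_def sum_negf)

definition cinner :: "complex^'n \<Rightarrow> complex^'n \<Rightarrow> complex" where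
  "cinner v w = (\<Sum>i\<in>UNIV. cnj (v $ i) * w $ i)"

lemma qform_cinner: "qform M v = cinner v (M *v v)"
  by (simp add: qform_def cinner_def matrix_vector_mult_def sum_distrib_left mult.assoc)

lemma cinner_adj: "cinner v (adj M *v w) = cinner (M *v v) w"
proof -
  have "cinner v (adj M *v w) = (\<Sum>i\<in>UNIV. \<Sum>k\<in>UNIV. cnj (v $ i) * cnj (M $ k $ i) * w $ k)"
    by (simp add: cinner_def matrix_vector_mult_def sum_distrib_left mult.assoc)
  also have "\<dots> = (\<Sum>k\<in>UNIV. \<Sum>i\<in>UNIV. cnj (v $ i) * cnj (M $ k $ i) * w $ k)"
    by (rule sum.swap)
  also have "\<dots> = cinner (M *v v) w"
    by (simp add: cinner_def matrix_vector_mult_def sum_distrib_right sum_distrib_left cnj_sum mult.commute mult.left_commute)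
  finally show ?thesis .
qed

lemma qform_congr: "qform (adj X ** M ** X) v = qform M (X *v v)"
  by (simp add: qform_cinner cinner_adj flip: matrix_vector_mul_assoc)

lemma qform_add: "qform (A + B) v = qform A v + qform B v"
  by (simp add: qform_def algebra_simps sum.distrib)

lemma qform_uminus: "qform (- A) v = - qform A v"
  by (simp add: qform_def sum_negf)

lemma qform_diff: "qform (A - B) v = qform A v - qform B v"
  by (simp add: qform_def algebra_simps sum_subtractf)

lemma qform_scaleR: "qform (c *\<^sub>R A) v = of_real c * qform A v"
  apply (simp add: qform_def sum_distrib_left) apply (simp add: scaleR_conv_of_real mult_ac)
  done

lemma qform_sum: "finite S \<Longrightarrow> qform (sum f S) v = (\<Sum>i\<in>S. qform (f i) v)"
  by (induction S rule: finite_induct) (simp add: qform_def, simp add: qform_add)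

lemma herm_add: "hermitian A \<Longrightarrow> hermitian B \<Longrightarrow> hermitian (A + B)"
  by (simp add: hermitian_def adj_add)
lemma herm_diff: "hermitian A \<Longrightarrow> hermitian B \<Longrightarrow> hermitian (A - B)"
  by (simp add: hermitian_def adj_diff)
lemma herm_uminus: "hermitian A \<Longrightarrow> hermitian (- A)"
  by (simp add: hermitian_def adj_uminus)
lemma herm_scaleR: "hermitian A \<Longrightarrow> hermitian (c *\<^sub>R A)"
  by (simp add: hermitian_def adj_scaleR)
lemma herm_zero: "hermitian 0"
  by (simp add: hermitian_def vec_eq_iff)
lemma herm_sum: "finite S \<Longrightarrow> (\<And>i. i \<in> S \<Longrightarrow> hermitian (f i)) \<Longrightarrow> hermitian (sum f S)"
  by (induction S rule: finite_induct) (auto simp: herm_zero herm_add)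
lemma herm_congr: "hermitian M \<Longrightarrow> hermitian (adj X ** M ** X)"
  by (simp add: hermitian_def adj_mult matrix_mul_assoc)

lemma psd_add: "psd A \<Longrightarrow> psd B \<Longrightarrow> psd (A + B)"
  by (simp add: psd_def herm_add qform_add)
lemma psd_scaleR: "psd A \<Longrightarrow> 0 \<le> c \<Longrightarrow> psd (c *\<^sub>R A)"
  by (simp add: psd_def herm_scaleR qform_scaleR)
lemma psd_zero: "psd 0"
  by (simp add: psd_def herm_zero qform_def)
lemma psd_sum: "finite S \<Longrightarrow> (\<And>i. i \<in> S \<Longrightarrow> psd (f i)) \<Longrightarrow> psd (sum f S)"
  by (induction S rule: finite_induct) (auto simp: psd_zero psd_add)
lemma psd_congr: "psd M \<Longrightarrow> psd (adj X ** M ** X)"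
  by (simp add: psd_def herm_congr qform_congr)

lemma psd_outer: "psd (outer v)"
proof -
  have h: "hermitian (outer v)" by (simp add: hermitian_def outer_def vec_eq_iff mult.commute)
  have e: "qform (outer v) w = (\<Sum>i\<in>UNIV. cnj (w $ i) * v $ i) * cnj (\<Sum>j\<in>UNIV. cnj (w $ j) * v $ j)" for w
    apply (simp add: qform_def outer_def sum_distrib_left sum_distrib_right cnj_sum mult.commute mult.left_commute)
    apply (subst sum.swap) apply (simp add: mult_ac)
    done
  have "0 \<le> Re (qform (outer v) w)" for w
    unfolding e complex_mult_cnj by simp
  then show ?thesis using h by (simp add: psd_def)
qed



lemma mmult_add_left: "((A::complex^_^_) + B) ** C = A ** C + B ** C"
  by (simp add: vec_eq_iff matrix_matrix_mult_def algebra_simps sum.distrib)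

definition BF :: "complex^'n^'n \<Rightarrow> complex^'r^'n \<Rightarrow> complex^'r^'n \<Rightarrow> complex^'r^'r" where
  "BF M X Y = adj X ** M ** Y"

lemma BF_bilinear: "bilinear (BF M)"
  unfolding bilinear_def BF_def
  by (auto intro!: linearI simp: adj_add adj_scaleR mmult_add_left matrix_add_ldistrib
      mmult_scaleR_left mmult_scaleR_right)

lemma BF_bb: "bounded_bilinear (BF M)"
  using BF_bilinear bilinear_conv_bounded_bilinear by blast

lemma BF_addM: "BF (M1 + M2) X Y = BF M1 X Y + BF M2 X Y"
  by (simp add: BF_def matrix_add_ldistrib mmult_add_left)

lemma BF_uminusM: "BF (- M) X Y = - BF M X Y"
  by (simp add: BF_def mmult_uminus_left mmult_uminus_right)

lemma BF_adj: "adj M = M \<Longrightarrow> adj (BF M X Y) = BF M Y X"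
  by (simp add: BF_def adj_mult matrix_mul_assoc)

lemma bil_conv:
  assumes h: "bilinear h" and ab: "a + b = 1"
  shows "a *\<^sub>R h X X + b *\<^sub>R h Y Y - h (a *\<^sub>R X + b *\<^sub>R Y) (a *\<^sub>R X + b *\<^sub>R Y)
       = (a * b) *\<^sub>R h (X - Y) (X - Y)"
proof -
  have b: "b = 1 - a" using ab by simp
  show ?thesis
    unfolding b
    by (simp add: bilinear_ladd[OF h] bilinear_radd[OF h] bilinear_lmul[OF h] bilinear_rmul[OF h]
        bilinear_lsub[OF h] bilinear_rsub[OF h] algebra_simps)
qed



definition VV :: "complex^'n^'n \<Rightarrow> complex^'n^'n \<Rightarrow> complex^'r^'n \<Rightarrow> complex^'r^'n \<Rightarrow> complex^'r^'r" where
  "VV M1 M2 X0 X = BF M1 X X + BF M2 X X0 + BF M2 X0 X - BF M2 X0 X0"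

lemma VV_gap: "VV M1 M2 X0 X - BF (M1 + M2) X X = - BF M2 (X - X0) (X - X0)"
  using BF_bilinear[of M2]
  by (simp add: VV_def BF_addM bilinear_lsub[OF BF_bilinear] bilinear_rsub[OF BF_bilinear] algebra_simps)

lemma VV_at: "VV M1 M2 X0 X0 = BF (M1 + M2) X0 X0"
  by (simp add: VV_def BF_addM)

lemma VV_conv:
  assumes ab: "a + b = 1"
  shows "a *\<^sub>R VV M1 M2 X0 X + b *\<^sub>R VV M1 M2 X0 Y - VV M1 M2 X0 (a *\<^sub>R X + b *\<^sub>R Y)
     = (a * b) *\<^sub>R BF M1 (X - Y) (X - Y)"
proof -
  note h2 = BF_bilinear[of M2]
  have l: "BF M2 (a *\<^sub>R X + b *\<^sub>R Y) X0 = a *\<^sub>R BF M2 X X0 + b *\<^sub>R BF M2 Y X0"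
    by (simp add: bilinear_ladd[OF h2] bilinear_lmul[OF h2])
  have r: "BF M2 X0 (a *\<^sub>R X + b *\<^sub>R Y) = a *\<^sub>R BF M2 X0 X + b *\<^sub>R BF M2 X0 Y"
    by (simp add: bilinear_radd[OF h2] bilinear_rmul[OF h2])
  have c: "BF M2 X0 X0 = a *\<^sub>R BF M2 X0 X0 + b *\<^sub>R BF M2 X0 X0"
    by (metis ab scaleR_add_left scaleR_one)
  have "a *\<^sub>R VV M1 M2 X0 X + b *\<^sub>R VV M1 M2 X0 Y - VV M1 M2 X0 (a *\<^sub>R X + b *\<^sub>R Y)
      = a *\<^sub>R BF M1 X X + b *\<^sub>R BF M1 Y Y - BF M1 (a *\<^sub>R X + b *\<^sub>R Y) (a *\<^sub>R X + b *\<^sub>R Y)"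
    unfolding VV_def l r by (subst (2) c) (simp add: algebra_simps)
  also have "\<dots> = (a * b) *\<^sub>R BF M1 (X - Y) (X - Y)"
    by (rule bil_conv[OF BF_bilinear ab])
  finally show ?thesis .
qed

lemma VV_herm: "hermitian M1 \<Longrightarrow> hermitian M2 \<Longrightarrow> hermitian (VV M1 M2 X0 X)"
  unfolding VV_def hermitian_def
  by (simp add: adj_add adj_diff BF_adj[of M1] BF_adj[of M2])

lemma BF_herm: "hermitian M \<Longrightarrow> hermitian (BF M X X)"
  unfolding hermitian_def by (simp add: BF_adj[of M])

lemma BF_psd: "psd M \<Longrightarrow> psd (BF M X X)"
  unfolding BF_def by (rule psd_congr)

lemma BF_deriv: "((\<lambda>X. BF M X X) has_derivative (\<lambda>H. BF M X0 H + BF M H X0)) (at X0)"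
  using bounded_bilinear.FDERIV[OF BF_bb[of M], OF has_derivative_ident has_derivative_ident, of X0 UNIV]
  by simp

lemma VV_deriv:
  "(VV M1 M2 X0 has_derivative (\<lambda>H. BF (M1 + M2) X0 H + BF (M1 + M2) H X0)) (at X0)"
proof -
  have d2: "((\<lambda>X. BF M2 X X0) has_derivative (\<lambda>H. BF M2 H X0)) (at X0)"
    by (rule bounded_linear_imp_has_derivative[OF bounded_bilinear.bounded_linear_left[OF BF_bb]])
  have d3: "((\<lambda>X. BF M2 X0 X) has_derivative (\<lambda>H. BF M2 X0 H)) (at X0)"
    by (rule bounded_linear_imp_has_derivative[OF bounded_bilinear.bounded_linear_right[OF BF_bb]])
  have "((\<lambda>X. BF M1 X X + BF M2 X X0 + BF M2 X0 X - BF M2 X0 X0) has_derivative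
        (\<lambda>H. (BF M1 X0 H + BF M1 H X0) + BF M2 H X0 + BF M2 X0 H - 0)) (at X0)"
    by (intro has_derivative_diff has_derivative_add BF_deriv d2 d3 has_derivative_const)
  then show ?thesis
    unfolding VV_def[abs_def]
    by (rule has_derivative_eq_rhs) (auto simp: BF_addM algebra_simps)
qed



lemma term_eq: "(\<chi> a b. complex_of_real (lam i) * outer (u i) $ a $ b) = lam i *\<^sub>R outer (u i)"
  apply (simp add: vec_eq_iff) apply (simp add: scaleR_conv_of_real)
  done

lemma psd_pos: "psd (pos_part u lam)"
  unfolding pos_part_def term_eq
  by (rule psd_sum) (auto intro!: psd_scaleR psd_outer)

lemma psd_negneg: "psd (- neg_part u lam)"
proof -
  have "- neg_part u lam = (\<Sum>i\<in>{i. lam i < 0}. (- lam i) *\<^sub>R outer (u i))"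
    unfolding neg_part_def term_eq by (simp add: sum_negf)
  also have "psd \<dots>"
  proof (rule psd_sum)
    fix i assume "i \<in> {i. lam i < 0}"
    then show "psd ((- lam i) *\<^sub>R outer (u i))" by (intro psd_scaleR psd_outer) simp
  qed simp
  finally show ?thesis .
qed

lemma herm_pos: "hermitian (pos_part u lam)"
  using psd_pos psd_def by blast

lemma herm_neg: "hermitian (neg_part u lam)"
  using psd_negneg[of u lam] herm_uminus[of "- neg_part u lam"] by (simp add: psd_def)

lemma A_split:
  assumes "eigen_decomp A u lam"
  shows "A = pos_part u lam + neg_part u lam"
proof -
  let ?f = "\<lambda>i. lam i *\<^sub>R outer (u i)"
  have "A = (\<Sum>i\<in>UNIV. ?f i)"
    using assms unfolding eigen_decomp_def term_eq by simp
  also have "\<dots> = (\<Sum>i\<in>{i. lam i > 0} \<union> {i. lam i < 0}. ?f i)"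
    by (rule sum.mono_neutral_right) auto
  also have "\<dots> = (\<Sum>i\<in>{i. lam i > 0}. ?f i) + (\<Sum>i\<in>{i. lam i < 0}. ?f i)"
    by (rule sum.union_disjoint) auto
  finally show ?thesis unfolding pos_part_def neg_part_def term_eq .
qed

lemma main_gen:
  fixes g :: "complex^'r^'r \<Rightarrow> real" and X0 :: "complex^'r^'n"
  assumes hM1: "hermitian M1" and hM2: "hermitian M2" and G: "in_G g"
    and C: "(MND g \<and> psd M1 \<and> psd (- M2)) \<or> (MNI g \<and> psd (- M1) \<and> psd M2)"
  shows "convex_on UNIV (\<lambda>X. g (VV M1 M2 X0 X))
    \<and> (\<forall>X. g (VV M1 M2 X0 X) \<ge> g (BF (M1 + M2) X X))
    \<and> g (VV M1 M2 X0 X0) = g (BF (M1 + M2) X0 X0)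
    \<and> (\<exists>D. ((\<lambda>X. g (VV M1 M2 X0 X)) has_derivative D) (at X0)
         \<and> ((\<lambda>X. g (BF (M1 + M2) X X)) has_derivative D) (at X0))"
proof -
  let ?V = "VV M1 M2 X0"
  let ?Q = "\<lambda>X. BF (M1 + M2) X X"
  have cg: "convex_on herm_set g" and dg: "\<And>W. W \<in> herm_set \<Longrightarrow> g differentiable (at W within herm_set)"
    using G by (auto simp: in_G_def)
  have hV: "\<And>X. ?V X \<in> herm_set" using VV_herm[OF hM1 hM2] by (simp add: herm_set_def)
  have hQ: "\<And>X. ?Q X \<in> herm_set" using BF_herm herm_add[OF hM1 hM2] by (simp add: herm_set_def)
  have hC: "\<And>a b X Y. a *\<^sub>R ?V X + b *\<^sub>R ?V Y \<in> herm_set"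
    using hV by (simp add: herm_set_def herm_add herm_scaleR)
  have cvx: "g (?V (a *\<^sub>R X + b *\<^sub>R Y)) \<le> g (a *\<^sub>R ?V X + b *\<^sub>R ?V Y)"
    if ab: "0 \<le> a" "0 \<le> b" "a + b = 1" for a b X Y
  proof -
    have gap: "a *\<^sub>R ?V X + b *\<^sub>R ?V Y - ?V (a *\<^sub>R X + b *\<^sub>R Y) = (a * b) *\<^sub>R BF M1 (X - Y) (X - Y)"
      by (rule VV_conv) (use ab in simp)
    from C show ?thesis
    proof
      assume c: "MND g \<and> psd M1 \<and> psd (- M2)"
      have "loewner_ge (a *\<^sub>R ?V X + b *\<^sub>R ?V Y) (?V (a *\<^sub>R X + b *\<^sub>R Y))"
        unfolding loewner_ge_def gap using c ab by (auto intro!: psd_scaleR BF_psd)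
      then show ?thesis using c hC hV unfolding MND_def by blast
    next
      assume c: "MNI g \<and> psd (- M1) \<and> psd M2"
      have "?V (a *\<^sub>R X + b *\<^sub>R Y) - (a *\<^sub>R ?V X + b *\<^sub>R ?V Y) = (a * b) *\<^sub>R BF (- M1) (X - Y) (X - Y)"
        using gap by (simp add: BF_uminusM) (metis minus_diff_eq)
      then have "loewner_ge (?V (a *\<^sub>R X + b *\<^sub>R Y)) (a *\<^sub>R ?V X + b *\<^sub>R ?V Y)"
        unfolding loewner_ge_def using c ab by (auto intro!: psd_scaleR BF_psd)
      then show ?thesis using c hC hV unfolding MNI_def by blast
    qed
  qed
  have part1: "convex_on UNIV (\<lambda>X. g (?V X))"
    unfolding convex_on_def
  proof (intro conjI ballI allI impI)
    fix X Y :: "complex^'r^'n" and a b :: real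
    assume ab: "0 \<le> a" "0 \<le> b" "a + b = 1"
    have "g (?V (a *\<^sub>R X + b *\<^sub>R Y)) \<le> g (a *\<^sub>R ?V X + b *\<^sub>R ?V Y)" by (rule cvx[OF ab])
    also have "\<dots> \<le> a * g (?V X) + b * g (?V Y)"
      using cg hV ab unfolding convex_on_def by blast
    finally show "g (?V (a *\<^sub>R X + b *\<^sub>R Y)) \<le> a * g (?V X) + b * g (?V Y)" .
  qed simp
  have part2: "g (?V X) \<ge> g (?Q X)" for X
  proof -
    have gap: "?V X - ?Q X = - BF M2 (X - X0) (X - X0)" by (rule VV_gap)
    from C show ?thesis
    proof
      assume c: "MND g \<and> psd M1 \<and> psd (- M2)"
      have "loewner_ge (?V X) (?Q X)"
        unfolding loewner_ge_def gap using c BF_psd[of "- M2"] by (simp add: BF_uminusM)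
      then show ?thesis using c hQ hV unfolding MND_def by blast
    next
      assume c: "MNI g \<and> psd (- M1) \<and> psd M2"
      have "?Q X - ?V X = BF M2 (X - X0) (X - X0)" by (metis gap minus_diff_eq minus_minus)
      then have "loewner_ge (?Q X) (?V X)"
        unfolding loewner_ge_def using c BF_psd[of M2 "X - X0"] by simp
      then show ?thesis using c hQ hV unfolding MNI_def by blast
    qed
  qed
  have part3: "g (?V X0) = g (?Q X0)" by (simp add: VV_at)
  have part4: "\<exists>D. ((\<lambda>X. g (?V X)) has_derivative D) (at X0) \<and> ((\<lambda>X. g (?Q X)) has_derivative D) (at X0)"
  proof -
    obtain g' where g': "(g has_derivative g') (at (?Q X0) within herm_set)"
      using dg[OF hQ] unfolding differentiable_def by blast
    let ?L = "\<lambda>H. BF (M1 + M2) X0 H + BF (M1 + M2) H X0"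
    have gV: "(g has_derivative g') (at (?V X0) within range ?V)"
      using g' hV by (auto simp: VV_at intro: has_derivative_subset)
    have gQ: "(g has_derivative g') (at (?Q X0) within range ?Q)"
      using g' hQ by (auto intro: has_derivative_subset)
    have "((\<lambda>X. g (?V X)) has_derivative (\<lambda>H. g' (?L H))) (at X0 within UNIV)"
      by (rule has_derivative_in_compose[OF _ gV]) (simp add: VV_deriv)
    moreover have "((\<lambda>X. g (?Q X)) has_derivative (\<lambda>H. g' (?L H))) (at X0 within UNIV)"
      by (rule has_derivative_in_compose[OF _ gQ]) (simp add: BF_deriv)
    ultimately show ?thesis by auto
  qed
  show ?thesis using part1 part2 part3 part4 by blast
qed


theorem theorem2:
  fixes A :: "complex^'n^'n"
    and u :: "'n \<Rightarrow> complex^'n" and lam :: "'n \<Rightarrow> real"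
    and g :: "complex^'r^'r \<Rightarrow> real"
    and X0 :: "complex^'r^'n"
    and U1 U2 :: "complex^'r^'n \<Rightarrow> complex^'r^'r"
    and uu :: "complex^'r^'n \<Rightarrow> real"
  assumes "hermitian A"
    and "eigen_decomp A u lam"
    and "in_G g"
    and "U1 = (\<lambda>X. adj X ** pos_part u lam ** X + adj X ** neg_part u lam ** X0
                    + adj X0 ** neg_part u lam ** X - adj X0 ** neg_part u lam ** X0)"
    and "U2 = (\<lambda>X. adj X ** neg_part u lam ** X + adj X ** pos_part u lam ** X0
                    + adj X0 ** pos_part u lam ** X - adj X0 ** pos_part u lam ** X0)"
    and "(MND g \<and> uu = (\<lambda>X. g (U1 X))) \<or> (MNI g \<and> uu = (\<lambda>X. g (U2 X)))"
  shows "convex_on UNIV uu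
    \<and> (\<forall>X. uu X \<ge> g (adj X ** A ** X))
    \<and> uu X0 = g (adj X0 ** A ** X0)
    \<and> (\<exists>D. (uu has_derivative D) (at X0) \<and> ((\<lambda>X. g (adj X ** A ** X)) has_derivative D) (at X0))"
proof -
  let ?P = "pos_part u lam" and ?N = "neg_part u lam"
  have Asp: "A = ?P + ?N" using A_split[OF assms(2)] .
  have Q1: "(\<lambda>X. g (adj X ** A ** X)) = (\<lambda>X. g (BF (?P + ?N) X X))"
    using Asp by (simp add: BF_def)
  have Q2: "(\<lambda>X. g (adj X ** A ** X)) = (\<lambda>X. g (BF (?N + ?P) X X))"
    using Asp by (simp add: BF_def add.commute)
  have P1: "\<And>X. adj X ** A ** X = BF (?P + ?N) X X" using Asp by (simp add: BF_def)
  have P2: "\<And>X. adj X ** A ** X = BF (?N + ?P) X X" using Asp by (simp add: BF_def add.commute)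
  from assms(6) show ?thesis
  proof
    assume c: "MND g \<and> uu = (\<lambda>X. g (U1 X))"
    then have uu: "uu = (\<lambda>X. g (VV ?P ?N X0 X))"
      using assms(4) by (simp add: VV_def BF_def)
    have "MND g \<and> psd ?P \<and> psd (- ?N)" using c psd_pos psd_negneg by blast
    then have M: "convex_on UNIV (\<lambda>X. g (VV ?P ?N X0 X))
      \<and> (\<forall>X. g (VV ?P ?N X0 X) \<ge> g (BF (?P + ?N) X X))
      \<and> g (VV ?P ?N X0 X0) = g (BF (?P + ?N) X0 X0)
      \<and> (\<exists>D. ((\<lambda>X. g (VV ?P ?N X0 X)) has_derivative D) (at X0)
         \<and> ((\<lambda>X. g (BF (?P + ?N) X X)) has_derivative D) (at X0))"
      by (intro main_gen herm_pos herm_neg assms(3)) blast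
    show ?thesis unfolding uu using M by (simp only: P1 simp_thms)
  next
    assume c: "MNI g \<and> uu = (\<lambda>X. g (U2 X))"
    then have uu: "uu = (\<lambda>X. g (VV ?N ?P X0 X))"
      using assms(5) by (simp add: VV_def BF_def)
    have "MNI g \<and> psd (- ?N) \<and> psd ?P" using c psd_pos psd_negneg by blast
    then have M: "convex_on UNIV (\<lambda>X. g (VV ?N ?P X0 X))
      \<and> (\<forall>X. g (VV ?N ?P X0 X) \<ge> g (BF (?N + ?P) X X))
      \<and> g (VV ?N ?P X0 X0) = g (BF (?N + ?P) X0 X0)
      \<and> (\<exists>D. ((\<lambda>X. g (VV ?N ?P X0 X)) has_derivative D) (at X0)
         \<and> ((\<lambda>X. g (BF (?N + ?P) X X)) has_derivative D) (at X0))"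
      by (intro main_gen herm_neg herm_pos assms(3)) blast
    show ?thesis unfolding uu using M by (simp only: P2 simp_thms)
  qed
qed

end
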